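(* For any pure $n$-qubit state $\psi$ and any $0<\tau<1$, $F_\psi(\tau)\le\dfrac{M_1(\psi)}{\log_2(1/\tau)}$.
   Context: Pauli strings $P_x$, $x\in\{0,1\}^{2n}$, are the $n$-qubit Hermitian Pauli strings; $\alpha_\psi(x)=\mathrm{tr}(\psi P_x)$; the Pauli distribution is $p_\psi(x)=\alpha_\psi(x)^2/2^n$. The CDF is $F_\psi(\tau)=\sum_{x:\,\alpha_\psi(x)^2<\tau}p_\psi(x)$. $M_1(\psi)=H_1(p_\psi)-n$, where $H_1(p)=-\sum_xp(x)\log_2p(x)$. *)

theory Defs
  imports Complex_Main
begin

text \<open>The computational basis of n qubits is indexed by j < 2^n, and qubit q
  of basis index j is the bit (j div 2^q) mod 2. A Pauli label x in {0,1}^(2n) is encoded as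
  a natural number x < 2^(2n); for qubit q its X-bit is bit q of x and its Z-bit is bit (n+q).\<close>

definition bit_of :: "nat \<Rightarrow> nat \<Rightarrow> nat" where
  "bit_of j q = (j div 2 ^ q) mod 2"

text \<open>Single-qubit Hermitian Pauli matrix selected by (X-bit a, Z-bit b):
  (0,0) = I, (1,0) = X, (0,1) = Z, (1,1) = Y. Entry (j,k) with j,k in {0,1}.\<close>
definition pauli1 :: "nat \<Rightarrow> nat \<Rightarrow> nat \<Rightarrow> nat \<Rightarrow> complex" where
  "pauli1 a b j k =
     (if a = 0 \<and> b = 0 then (if j = k then 1 else 0)
      else if a = 1 \<and> b = 0 then (if j \<noteq> k then 1 else 0)
      else if a = 0 \<and> b = 1 then (if j = k then (if j = 0 then 1 else -1) else 0)
      else (if j \<noteq> k then (if j = 1 then \<i> else -\<i>) else 0))"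

definition pauli_string :: "nat \<Rightarrow> nat \<Rightarrow> nat \<Rightarrow> nat \<Rightarrow> complex" where
  "pauli_string n x j k =
     (\<Prod>q<n. pauli1 (bit_of x q) (bit_of x (n + q)) (bit_of j q) (bit_of k q))"

definition pure_dm :: "(nat \<Rightarrow> complex) \<Rightarrow> nat \<Rightarrow> nat \<Rightarrow> complex" where
  "pure_dm v j k = v j * cnj (v k)"

definition is_pure_state :: "nat \<Rightarrow> (nat \<Rightarrow> complex) \<Rightarrow> bool" where
  "is_pure_state n v \<longleftrightarrow> (\<Sum>j<2^n. (cmod (v j))\<^sup>2) = 1"

text \<open>alpha_psi(x) = tr(psi P_x) (real, since both are Hermitian; we take the real part).\<close>
definition pauli_coeff :: "nat \<Rightarrow> (nat \<Rightarrow> complex) \<Rightarrow> nat \<Rightarrow> real" where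
  "pauli_coeff n v x = Re (\<Sum>j<2^n. \<Sum>k<2^n. pure_dm v j k * pauli_string n x k j)"

definition pauli_dist :: "nat \<Rightarrow> (nat \<Rightarrow> complex) \<Rightarrow> nat \<Rightarrow> real" where
  "pauli_dist n v x = (pauli_coeff n v x)\<^sup>2 / 2 ^ n"

definition pauli_cdf :: "nat \<Rightarrow> (nat \<Rightarrow> complex) \<Rightarrow> real \<Rightarrow> real" where
  "pauli_cdf n v \<tau> = (\<Sum>x \<in> {x. x < 2^(2*n) \<and> (pauli_coeff n v x)\<^sup>2 < \<tau>}. pauli_dist n v x)"

definition shannon_H1 :: "nat \<Rightarrow> (nat \<Rightarrow> real) \<Rightarrow> real" where
  "shannon_H1 N p = - (\<Sum>x<N. if p x = 0 then 0 else p x * log 2 (p x))"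

definition stab_renyi_M1 :: "nat \<Rightarrow> (nat \<Rightarrow> complex) \<Rightarrow> real" where
  "stab_renyi_M1 n v = shannon_H1 (2^(2*n)) (pauli_dist n v) - real n"

end

theory Submission
  imports Defs
begin


lemma sum_split_mult:
  fixes f :: "nat \<Rightarrow> 'a::comm_monoid_add"
  shows "(\<Sum>x<k*m. f x) = (\<Sum>b<k. \<Sum>a<m. f (a + m*b))"
proof -
  have "(\<Sum>x<k*m. f x) = (\<Sum>b<k. sum f {b*m..<b*m+m})"
    by (rule sum.nat_group[symmetric])
  also have "\<dots> = (\<Sum>b<k. \<Sum>a<m. f (a + m*b))"
  proof (rule sum.cong[OF refl])
    fix b
    have "sum f {0+b*m..<m+b*m} = (\<Sum>a\<in>{0..<m}. f (a + b*m))"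
      by (rule sum.shift_bounds_nat_ivl)
    then show "sum f {b*m..<b*m+m} = (\<Sum>a<m. f (a + m*b))"
      by (simp add: atLeast0LessThan add.commute mult.commute)
  qed
  finally show ?thesis .
qed

lemma bit_of_lo:
  assumes "q < m" shows "bit_of (k + 2^m*c) q = bit_of k q"
proof -
  have e: "(2::nat)^m = 2^q * 2^(m-q)" using assms by (simp flip: power_add)
  have "(k + 2^m*c) div 2^q = k div 2^q + 2^(m-q)*c"
    unfolding e by (simp add: mult.assoc)
  moreover obtain d where "(2::nat)^(m-q)*c = 2*d" using assms
    by (metis dvd_def dvd_mult2 dvd_power zero_less_diff)
  ultimately show ?thesis unfolding bit_of_def by simp
qed

lemma bit_of_hi:
  assumes "k < 2^m" shows "bit_of (k + 2^m*c) (m+q) = bit_of c q"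
proof -
  have "(k + 2^m*c) div 2^m = c" using assms by simp
  then show ?thesis unfolding bit_of_def by (simp add: power_add div_mult2_eq)
qed

lemma bit_of_top:
  assumes "k < 2^m" shows "bit_of (k + 2^m*c) m = c mod 2"
  using bit_of_hi[OF assms, of c 0] by (simp add: bit_of_def)

lemma bit_of_01: "bit_of j q = 0 \<or> bit_of j q = 1"
  unfolding bit_of_def by auto

lemma sum_prod_bits:
  fixes g :: "nat \<Rightarrow> nat \<Rightarrow> 'a::comm_semiring_1"
  shows "(\<Sum>k<2^m. \<Prod>q<m. g q (bit_of k q)) = (\<Prod>q<m. g q 0 + g q 1)"
proof (induction m)
  case 0
  then show ?case by (simp add: bit_of_def)
next
  case (Suc m)
  have "(\<Sum>k<2^Suc m. \<Prod>q<Suc m. g q (bit_of k q))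
      = (\<Sum>c<2. \<Sum>k<2^m. \<Prod>q<Suc m. g q (bit_of (k + 2^m*c) q))"
    using sum_split_mult[of "\<lambda>k. \<Prod>q<Suc m. g q (bit_of k q)" 2 "2^m"]
    by (simp add: mult.commute)
  also have "\<dots> = (\<Sum>c<2. \<Sum>k<2^m. (\<Prod>q<m. g q (bit_of k q)) * g m (c mod 2))"
    by (intro sum.cong refl) (simp add: bit_of_lo bit_of_top)
  also have "\<dots> = (\<Prod>q<m. g q 0 + g q 1) * (g m 0 + g m 1)"
  proof -
    have s2: "\<And>h::nat\<Rightarrow>'a. (\<Sum>c<2::nat. h c) = h 0 + h 1" by (simp add: numeral_2_eq_2)
    show ?thesis unfolding s2 by (simp add: Suc.IH flip: sum_distrib_right distrib_left)
  qed
  finally show ?case by simp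
qed

lemma bits_eq:
  assumes "a < 2^n" "b < 2^n" "\<forall>q<n. bit_of a q = bit_of b q"
  shows "a = b"
  using assms
proof (induction n arbitrary: a b)
  case 0 then show ?case by simp
next
  case (Suc n)
  have "a div 2 = b div 2"
  proof (rule Suc.IH)
    show "a div 2 < 2^n" "b div 2 < 2^n" using Suc.prems by auto
    show "\<forall>q<n. bit_of (a div 2) q = bit_of (b div 2) q"
    proof (intro allI impI)
      fix q assume "q < n"
      then have "bit_of a (Suc q) = bit_of b (Suc q)" using Suc.prems by auto
      then show "bit_of (a div 2) q = bit_of (b div 2) q"
        by (simp add: bit_of_def div_mult2_eq)
    qed
  qed
  moreover have "a mod 2 = b mod 2" using Suc.prems(3) by (auto simp: bit_of_def)
  ultimately show ?case by (metis div_mult_mod_eq)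
qed



lemma ps_split:
  assumes "a < 2^n"
  shows "pauli_string n (a + 2^n*b) k j =
    (\<Prod>q<n. pauli1 (bit_of a q) (bit_of b q) (bit_of k q) (bit_of j q))"
  unfolding pauli_string_def
  by (intro prod.cong refl) (simp add: bit_of_lo bit_of_hi assms)

lemma pauli1_cnj:
  assumes "s = 0 \<or> s = 1" "t = 0 \<or> t = 1"
  shows "cnj (pauli1 a b s t) = pauli1 a b t s"
  using assms unfolding pauli1_def by auto

lemma ps_cnj: "cnj (pauli_string n x k j) = pauli_string n x j k"
  unfolding pauli_string_def cnj_prod
  by (intro prod.cong refl pauli1_cnj bit_of_01)

lemma pauli1_row:
  assumes "s = 0 \<or> s = 1"
  shows "cmod (pauli1 a b 0 s) + cmod (pauli1 a b 1 s) = 1"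
  using assms unfolding pauli1_def by auto

lemma pauli1_col:
  assumes "s = 0 \<or> s = 1"
  shows "cmod (pauli1 a b s 0) + cmod (pauli1 a b s 1) = 1"
  using assms unfolding pauli1_def by auto

lemma ps_row: "(\<Sum>k<2^n. cmod (pauli_string n x k j)) = 1"
proof -
  have "(\<Sum>k<2^n. cmod (pauli_string n x k j)) =
     (\<Sum>k<2^n. \<Prod>q<n. (\<lambda>q t. cmod (pauli1 (bit_of x q) (bit_of x (n + q)) t (bit_of j q))) q (bit_of k q))"
    unfolding pauli_string_def by (simp add: prod_norm)
  also have "\<dots> = 1" by (subst sum_prod_bits) (intro prod.neutral ballI pauli1_row bit_of_01)
  finally show ?thesis .
qed

lemma ps_col: "(\<Sum>j<2^n. cmod (pauli_string n x k j)) = 1"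
proof -
  have "(\<Sum>j<2^n. cmod (pauli_string n x k j)) =
     (\<Sum>j<2^n. \<Prod>q<n. (\<lambda>q t. cmod (pauli1 (bit_of x q) (bit_of x (n + q)) (bit_of k q) t)) q (bit_of j q))"
    unfolding pauli_string_def by (simp add: prod_norm)
  also have "\<dots> = 1" by (subst sum_prod_bits) (intro prod.neutral ballI pauli1_col bit_of_01)
  finally show ?thesis .
qed

lemma pauli1_complete:
  assumes "k = 0 \<or> k = 1" "j = 0 \<or> j = 1" "k' = 0 \<or> k' = 1" "j' = 0 \<or> j' = 1"
  shows "pauli1 0 0 k j * cnj (pauli1 0 0 k' j') + pauli1 1 0 k j * cnj (pauli1 1 0 k' j')
       + (pauli1 0 1 k j * cnj (pauli1 0 1 k' j') + pauli1 1 1 k j * cnj (pauli1 1 1 k' j'))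
       = (if k = k' \<and> j = j' then 2 else 0)"
  using assms unfolding pauli1_def by (auto simp: complex_eq_iff)



lemma prod_if_const:
  "(\<Prod>q<n. if P q then (2::complex) else 0) = (if \<forall>q<n. P q then 2^n else 0)"
proof (cases "\<forall>q<n. P q")
  case True then show ?thesis by simp
next
  case False
  then obtain q where "q < n" "\<not> P q" by auto
  then show ?thesis using False by (intro trans[OF prod_zero]) auto
qed

lemma bits_eq_iff:
  assumes "a < 2^n" "b < 2^n"
  shows "(\<forall>q<n. bit_of a q = bit_of b q) \<longleftrightarrow> a = b"
  using bits_eq[OF assms] by auto

lemma ps_complete:
  assumes "k < 2^n" "j < 2^n" "k' < 2^n" "j' < 2^n"
  shows "(\<Sum>x<2^(2*n). pauli_string n x k j * cnj (pauli_string n x k' j'))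
       = (if k = k' \<and> j = j' then 2^n else 0)"
proof -
  define h where "h q s t = pauli1 s t (bit_of k q) (bit_of j q) * cnj (pauli1 s t (bit_of k' q) (bit_of j' q))" for q s t
  have "(\<Sum>x<2^(2*n). pauli_string n x k j * cnj (pauli_string n x k' j'))
     = (\<Sum>b<2^n. \<Sum>a<2^n. pauli_string n (a + 2^n*b) k j * cnj (pauli_string n (a + 2^n*b) k' j'))"
    using sum_split_mult[of "\<lambda>x. pauli_string n x k j * cnj (pauli_string n x k' j')" "2^n" "2^n"]
    by (simp flip: power_add mult_2)
  also have "\<dots> = (\<Sum>b<2^n. \<Sum>a<2^n. \<Prod>q<n. (\<lambda>q s. h q s (bit_of b q)) q (bit_of a q))"
    by (intro sum.cong refl) (simp add: ps_split h_def prod.distrib)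
  also have "\<dots> = (\<Sum>b<2^n. \<Prod>q<n. (\<lambda>q t. h q 0 t + h q 1 t) q (bit_of b q))"
    by (subst sum_prod_bits) simp
  also have "\<dots> = (\<Prod>q<n. h q 0 0 + h q 1 0 + (h q 0 1 + h q 1 1))"
    by (subst sum_prod_bits) simp
  also have "\<dots> = (\<Prod>q<n. if bit_of k q = bit_of k' q \<and> bit_of j q = bit_of j' q then 2 else 0)"
    unfolding h_def by (intro prod.cong refl pauli1_complete bit_of_01)
  also have "\<dots> = (if k = k' \<and> j = j' then 2^n else 0)"
    unfolding prod_if_const using bits_eq_iff[OF assms(1,3)] bits_eq_iff[OF assms(2,4)] by auto
  finally show ?thesis .
qed



definition zc :: "nat \<Rightarrow> (nat \<Rightarrow> complex) \<Rightarrow> nat \<Rightarrow> complex" where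
  "zc n v x = (\<Sum>j<2^n. \<Sum>k<2^n. pure_dm v j k * pauli_string n x k j)"

lemma zc_real: "cnj (zc n v x) = zc n v x"
proof -
  have "cnj (zc n v x) = (\<Sum>j<2^n. \<Sum>k<2^n. cnj (v j) * v k * pauli_string n x j k)"
    unfolding zc_def pure_dm_def by (simp add: ps_cnj)
  also have "\<dots> = (\<Sum>k<2^n. \<Sum>j<2^n. cnj (v j) * v k * pauli_string n x j k)"
    by (rule sum.swap)
  also have "\<dots> = zc n v x"
    unfolding zc_def pure_dm_def by (intro sum.cong refl) (simp add: mult.commute)
  finally show ?thesis .
qed

lemma coeff_zc: "pauli_coeff n v x = Re (zc n v x)"
  unfolding pauli_coeff_def zc_def by simp

lemma zc_of_real: "zc n v x = of_real (pauli_coeff n v x)"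
  using zc_real[of n v x] unfolding coeff_zc by (simp add: complex_eq_iff)

lemma amgm: "(a::real) * b \<le> (a^2 + b^2) / 2"
  using sum_squares_ge_zero[of "a - b" 0] by (simp add: power2_eq_square algebra_simps)

lemma zc_bound:
  assumes "is_pure_state n v"
  shows "cmod (zc n v x) \<le> 1"
proof -
  let ?D = "{..<2^n::nat}"
  let ?P = "\<lambda>k j. cmod (pauli_string n x k j)"
  have "cmod (zc n v x) \<le> (\<Sum>j\<in>?D. cmod (\<Sum>k\<in>?D. pure_dm v j k * pauli_string n x k j))"
    unfolding zc_def by (rule norm_sum)
  also have "\<dots> \<le> (\<Sum>j\<in>?D. \<Sum>k\<in>?D. cmod (v j) * cmod (v k) * ?P k j)"
    by (intro sum_mono order.trans[OF norm_sum]) (simp add: pure_dm_def norm_mult)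
  also have "\<dots> \<le> (\<Sum>j\<in>?D. \<Sum>k\<in>?D. ((cmod (v j))^2 + (cmod (v k))^2) / 2 * ?P k j)"
    by (intro sum_mono mult_right_mono amgm) auto
  also have "\<dots> = (\<Sum>j\<in>?D. (cmod (v j))^2 * (\<Sum>k\<in>?D. ?P k j)) / 2
                 + (\<Sum>j\<in>?D. \<Sum>k\<in>?D. (cmod (v k))^2 * ?P k j) / 2"
    by (simp add: sum_distrib_left sum_divide_distrib add_divide_distrib distrib_right sum.distrib)
  also have "(\<Sum>j\<in>?D. \<Sum>k\<in>?D. (cmod (v k))^2 * ?P k j) = (\<Sum>k\<in>?D. (cmod (v k))^2 * (\<Sum>j\<in>?D. ?P k j))"
    by (subst sum.swap) (simp add: sum_distrib_left)
  also have "(\<Sum>j\<in>?D. (cmod (v j))^2 * (\<Sum>k\<in>?D. ?P k j)) / 2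
     + (\<Sum>k\<in>?D. (cmod (v k))^2 * (\<Sum>j\<in>?D. ?P k j)) / 2 = 1"
    using assms unfolding is_pure_state_def by (simp add: ps_row ps_col)
  finally show ?thesis .
qed

lemma coeff_sq_le1:
  assumes "is_pure_state n v"
  shows "(pauli_coeff n v x)^2 \<le> 1"
proof -
  have "\<bar>pauli_coeff n v x\<bar> \<le> 1"
    using zc_bound[OF assms, of x] abs_Re_le_cmod[of "zc n v x"] unfolding coeff_zc by linarith
  then show ?thesis by (simp add: abs_square_le_1)
qed



lemma delta2:
  fixes f :: "nat \<Rightarrow> nat \<Rightarrow> complex"
  assumes "j \<in> A" "k \<in> B" "finite A" "finite B"
  shows "(\<Sum>j'\<in>A. \<Sum>k'\<in>B. f j' k' * (if k = k' \<and> j = j' then C else 0)) = f j k * C"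
proof -
  have "(\<Sum>j'\<in>A. \<Sum>k'\<in>B. f j' k' * (if k = k' \<and> j = j' then C else 0))
      = (\<Sum>j'\<in>A. if j = j' then (\<Sum>k'\<in>B. if k = k' then f j' k' * C else 0) else 0)"
    by (auto intro!: sum.cong)
  also have "\<dots> = f j k * C" using assms by simp
  finally show ?thesis .
qed

lemma step1:
  "zc n v x * cnj (zc n v x) = (\<Sum>j<2^n. \<Sum>k<2^n. \<Sum>j'<2^n. \<Sum>k'<2^n.
           pure_dm v j k * cnj (pure_dm v j' k') * (pauli_string n x k j * cnj (pauli_string n x k' j')))"
  unfolding zc_def cnj_sum
  apply (simp only: sum_distrib_right)
  apply (simp only: sum_distrib_left)
  apply (intro sum.cong refl) apply (simp add: mult_ac)
  done

lemma step2:
  fixes f :: "nat \<Rightarrow> nat \<Rightarrow> nat \<Rightarrow> nat \<Rightarrow> nat \<Rightarrow> complex"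
  shows "(\<Sum>x\<in>X. \<Sum>j\<in>A. \<Sum>k\<in>B. \<Sum>j'\<in>C. \<Sum>k'\<in>E. f x j k j' k')
       = (\<Sum>j\<in>A. \<Sum>k\<in>B. \<Sum>j'\<in>C. \<Sum>k'\<in>E. \<Sum>x\<in>X. f x j k j' k')"
  by (simp only: sum.swap[where A=X])


lemma parseval:
  assumes "is_pure_state n v"
  shows "(\<Sum>x<2^(2*n). zc n v x * cnj (zc n v x)) = 2^n"
proof -
  let ?D = "{..<2^n::nat}"
  let ?X = "{..<2^(2*n)::nat}"
  define a where "a j k = pure_dm v j k" for j k
  let ?P = "pauli_string n"
  have "(\<Sum>x\<in>?X. zc n v x * cnj (zc n v x))
     = (\<Sum>x\<in>?X. \<Sum>j\<in>?D. \<Sum>k\<in>?D. \<Sum>j'\<in>?D. \<Sum>k'\<in>?D.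
           a j k * cnj (a j' k') * (?P x k j * cnj (?P x k' j')))"
    unfolding a_def step1 by (rule refl)
  also have "\<dots> = (\<Sum>j\<in>?D. \<Sum>k\<in>?D. \<Sum>j'\<in>?D. \<Sum>k'\<in>?D. \<Sum>x\<in>?X.
           a j k * cnj (a j' k') * (?P x k j * cnj (?P x k' j')))"
    by (rule step2)
  also have "\<dots> = (\<Sum>j\<in>?D. \<Sum>k\<in>?D. \<Sum>j'\<in>?D. \<Sum>k'\<in>?D.
           a j k * cnj (a j' k') * (if k = k' \<and> j = j' then 2^n else 0))"
    by (intro sum.cong refl, subst sum_distrib_left[symmetric], subst ps_complete) auto
  also have "\<dots> = (\<Sum>j\<in>?D. \<Sum>k\<in>?D. a j k * cnj (a j k) * 2^n)"
    by (intro sum.cong refl delta2) auto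
  also have "\<dots> = (\<Sum>j\<in>?D. \<Sum>k\<in>?D. of_real ((cmod (v j))^2 * (cmod (v k))^2 * 2^n))"
  proof (intro sum.cong refl)
    fix j k
    have "a j k * cnj (a j k) * 2^n = (v j * cnj (v j)) * (v k * cnj (v k)) * 2^n"
      unfolding a_def pure_dm_def by (simp add: mult_ac)
    also have "\<dots> = of_real ((cmod (v j))^2 * (cmod (v k))^2 * 2^n)"
      by (simp only: complex_norm_square[symmetric] of_real_mult of_real_power of_real_numeral)
    finally show "a j k * cnj (a j k) * 2^n = of_real ((cmod (v j))^2 * (cmod (v k))^2 * 2^n)" .
  qed
  also have "\<dots> = of_real ((\<Sum>j\<in>?D. (cmod (v j))^2) * (\<Sum>k\<in>?D. (cmod (v k))^2) * 2^n)"
  proof -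
    have "(\<Sum>j\<in>?D. (cmod (v j))^2) * (\<Sum>k\<in>?D. (cmod (v k))^2) * 2^n
        = (\<Sum>j\<in>?D. \<Sum>k\<in>?D. (cmod (v j))^2 * (cmod (v k))^2 * 2^n)"
      by (simp only: sum_distrib_left sum_distrib_right) (simp only: mult.commute)
    then show ?thesis by (simp only: of_real_sum)
  qed
  also have "\<dots> = 2^n" using assms unfolding is_pure_state_def by (simp only: mult_1 of_real_power of_real_numeral)
  finally show ?thesis .
qed

lemma sum_coeff_sq:
  assumes "is_pure_state n v"
  shows "(\<Sum>x<2^(2*n). (pauli_coeff n v x)^2) = 2^n"
proof -
  have "(\<Sum>x<2^(2*n). zc n v x * cnj (zc n v x)) = of_real (\<Sum>x<2^(2*n). (pauli_coeff n v x)^2)"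
    unfolding of_real_sum by (intro sum.cong refl) (simp only: zc_of_real complex_cnj_complex_of_real of_real_mult of_real_power power2_eq_square)
  then have "of_real (\<Sum>x<2^(2*n). (pauli_coeff n v x)^2) = (of_real (2^n) :: complex)"
    using parseval[OF assms] by simp
  then show ?thesis by (simp only: of_real_eq_iff)
qed



theorem lemma3:
  fixes n :: nat and v :: "nat \<Rightarrow> complex" and \<tau> :: real
  assumes "is_pure_state n v" and "0 < \<tau>" and "\<tau> < 1"
  shows "pauli_cdf n v \<tau> \<le> stab_renyi_M1 n v / log 2 (1 / \<tau>)"
proof -
  define \<alpha> where "\<alpha> x = (pauli_coeff n v x)^2" for x
  define p where "p x = pauli_dist n v x" for x
  define N where "N = (2::nat)^(2*n)"
  define L where "L = log 2 (1 / \<tau>)"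
  define g where "g x = (if \<alpha> x = 0 then 0 else p x * (- log 2 (\<alpha> x)))" for x
  define S where "S = {x. x < N \<and> \<alpha> x < \<tau>}"
  have p_def': "p x = \<alpha> x / 2^n" for x unfolding p_def \<alpha>_def pauli_dist_def by simp
  have a0: "\<alpha> x \<ge> 0" for x unfolding \<alpha>_def by simp
  have a1: "\<alpha> x \<le> 1" for x unfolding \<alpha>_def using coeff_sq_le1[OF assms(1)] .
  have p0: "p x \<ge> 0" for x unfolding p_def' using a0 by simp
  have L0: "L > 0" unfolding L_def using assms(2,3) by simp
  have g0: "g x \<ge> 0" for x
  proof (cases "\<alpha> x = 0")
    case False
    then have "log 2 (\<alpha> x) \<le> 0" using a0[of x] a1[of x] by simp
    then show ?thesis unfolding g_def using False p0[of x] by (simp add: mult_nonneg_nonpos)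
  qed (simp add: g_def)
  have sump: "(\<Sum>x<N. p x) = 1"
    unfolding p_def' N_def \<alpha>_def using sum_coeff_sq[OF assms(1)]
    by (simp flip: sum_divide_distrib)
  have termx: "- (if p x = 0 then 0 else p x * log 2 (p x)) = p x * real n + g x" for x
  proof (cases "\<alpha> x = 0")
    case True then show ?thesis unfolding g_def p_def' by simp
  next
    case False
    then have "\<alpha> x > 0" using a0[of x] by simp
    then have "log 2 (p x) = log 2 (\<alpha> x) - real n"
      unfolding p_def' by (simp add: log_divide log_nat_power)
    moreover have "p x \<noteq> 0" unfolding p_def' using \<open>\<alpha> x > 0\<close> by simp
    ultimately show ?thesis unfolding g_def using False
      by (simp add: algebra_simps del: log_divide) (metis distrib_left mult.commute)
  qed
  have M1: "stab_renyi_M1 n v = (\<Sum>x<N. g x)"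
  proof -
    have "shannon_H1 N p = (\<Sum>x<N. p x * real n + g x)"
      unfolding shannon_H1_def by (simp only: sum_negf[symmetric] termx)
    also have "\<dots> = real n + (\<Sum>x<N. g x)"
      by (simp add: sum.distrib sump flip: sum_distrib_right)
    finally show ?thesis unfolding stab_renyi_M1_def N_def p_def by simp
  qed
  have F: "pauli_cdf n v \<tau> = (\<Sum>x\<in>S. p x)"
    unfolding pauli_cdf_def S_def N_def p_def \<alpha>_def by simp
  have finS: "finite S" "S \<subseteq> {..<N}" unfolding S_def by auto
  have "(\<Sum>x\<in>S. p x) * L = (\<Sum>x\<in>S. p x * L)" by (simp add: sum_distrib_right)
  also have "\<dots> \<le> (\<Sum>x\<in>S. g x)"
  proof (rule sum_mono)
    fix x assume "x \<in> S"
    then have lt: "\<alpha> x < \<tau>" unfolding S_def by simp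
    show "p x * L \<le> g x"
    proof (cases "\<alpha> x = 0")
      case True then show ?thesis unfolding g_def p_def' by simp
    next
      case False
      then have "\<alpha> x > 0" using a0[of x] by simp
      then have "log 2 (\<alpha> x) < log 2 \<tau>" using lt by simp
      then have "L \<le> - log 2 (\<alpha> x)" unfolding L_def using assms(2) by (simp add: log_divide)
      then show ?thesis unfolding g_def using False p0[of x] using mult_left_mono[of L "- log 2 (\<alpha> x)" "p x"] by simp
    qed
  qed
  also have "\<dots> \<le> (\<Sum>x<N. g x)"
    by (rule sum_mono2) (use finS g0 in auto)
  finally have "pauli_cdf n v \<tau> * L \<le> stab_renyi_M1 n v" unfolding F M1 .
  then show ?thesis unfolding L_def[symmetric] using L0 by (simp add: pos_le_divide_eq)
qed


end
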